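(* Let $G$ be a graph with adjacency matrix $A$ whose degrees $d=A\mathbf 1$ are all positive, let $e=(i,j)$, $i\ne j$, $a_{ij}>0$, be any edge, and let $r>0$. Then the regularized centrality score satisfies $c_r(e)\ge 0$.
   Context: Graphs are undirected and possibly weighted on vertex set $\{1,\dots,n\}$, with symmetric nonnegative adjacency matrix $A=(a_{k\ell})$; $D=\mathrm{diag}(d)$, $\|d\|_1=\sum_kd_k$, $D^{\pm1/2}=\mathrm{diag}(d_k^{\pm1/2})$; $e_k$ is the $k$-th column of the identity and $\mathbf 1$ the all-ones vector. For $r>0$ and a symmetric nonnegative matrix $B$ with $B\mathbf 1=d$, the regularized Kemeny constant is $K_r(B)=\operatorname{Tr}\Big(\big((1+r)I-D^{-1/2}BD^{-1/2}+\tfrac{1}{\|d\|_1}D^{1/2}\mathbf 1\mathbf 1^TD^{1/2}\big)^{-1}\Big)-(1+r)^{-1}$. With $v=e_i-e_j$ and $\widehat A=A+a_{ij}vv^T$ (deleting edge $e$ and adding loops of weight $a_{ij}$ at $i$ and $j$; note $\widehat A\mathbf 1=d$), the regularized Kemeny-based centrality score is $c_r(e)=K_r(\widehat A)-K_r(A)$. *)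

theory Defs
  imports "HOL-Analysis.Analysis"
begin

definition deg :: "real^'n^'n \<Rightarrow> real^'n" where
  "deg B = B *v (\<chi> k. 1)"

definition diagm :: "('n::finite \<Rightarrow> real) \<Rightarrow> real^'n^'n" where
  "diagm f = (\<chi> k l. if k = l then f k else 0)"

definition outer :: "real^'n \<Rightarrow> real^'n \<Rightarrow> real^'n^'n" where
  "outer x y = (\<chi> k l. x $ k * y $ l)"

definition kemeny_reg :: "real \<Rightarrow> real^'n^'n \<Rightarrow> real" where
  "kemeny_reg r B =
     (let d = deg B;
          s = (\<Sum>k\<in>UNIV. \<bar>d $ k\<bar>);
          Dm = diagm (\<lambda>k. 1 / sqrt (d $ k));
          sq = (\<chi> k. sqrt (d $ k));
          M = (1 + r) *\<^sub>R mat 1 - Dm ** B ** Dm + (1 / s) *\<^sub>R outer sq sq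
      in trace (matrix_inv M) - 1 / (1 + r))"

definition edge_removed :: "real^'n^'n \<Rightarrow> 'n \<Rightarrow> 'n \<Rightarrow> real^'n^'n" where
  "edge_removed A i j =
     (let v = axis i (1::real) - axis j 1 in A + (A $ i $ j) *\<^sub>R outer v v)"

definition centrality_reg :: "real \<Rightarrow> real^'n^'n \<Rightarrow> 'n \<Rightarrow> 'n \<Rightarrow> real" where
  "centrality_reg r A i j = kemeny_reg r (edge_removed A i j) - kemeny_reg r A"

end

theory Submission imports Defs begin
lemma quad_sum:
  fixes M :: "real^'n^'n"
  shows "x \<bullet> (M *v x) = (\<Sum>k\<in>UNIV. \<Sum>l\<in>UNIV. x$k * M$k$l * x$l)"
  by (simp add: inner_vec_def matrix_vector_mult_def sum_distrib_left mult.assoc)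

lemma diag_sandwich:
  "(diagm f ** X ** diagm f) $ k $ l = f k * X$k$l * f l"
  by (simp add: diagm_def matrix_matrix_mult_def if_distrib if_distribR cong: if_cong)

lemma norm_quad:
  fixes B :: "real^'n^'n"
  assumes sym: "transpose B = B" and nn: "\<And>k l. B$k$l \<ge> 0" and dp: "\<And>k. deg B $ k > 0"
  shows "x \<bullet> ((diagm (\<lambda>k. 1 / sqrt (deg B $ k)) ** B ** diagm (\<lambda>k. 1 / sqrt (deg B $ k))) *v x) \<le> x \<bullet> x"
proof -
  define y where "y k = x$k / sqrt (deg B $ k)" for k
  have Bs: "B$l$k = B$k$l" for k l using sym by (metis transpose_def vec_lambda_beta)
  have L: "x \<bullet> ((diagm (\<lambda>k. 1 / sqrt (deg B $ k)) ** B ** diagm (\<lambda>k. 1 / sqrt (deg B $ k))) *v x)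
     = (\<Sum>k\<in>UNIV. \<Sum>l\<in>UNIV. B$k$l * y k * y l)"
    unfolding quad_sum diag_sandwich y_def by (simp add: field_simps)
  have xk: "x$k * x$k = (\<Sum>l\<in>UNIV. B$k$l * y k * y k)" for k
  proof -
    have "(\<Sum>l\<in>UNIV. B$k$l * y k * y k) = deg B $ k * (y k * y k)"
      by (simp add: deg_def matrix_vector_mult_def sum_distrib_left sum_distrib_right mult_ac)
    also have "\<dots> = x$k * x$k" using dp[of k] unfolding y_def
      by (simp add: field_simps)
    finally show ?thesis by simp
  qed
  have R1: "x \<bullet> x = (\<Sum>k\<in>UNIV. \<Sum>l\<in>UNIV. B$k$l * y k * y k)"
    by (simp add: inner_vec_def xk)
  have R2: "x \<bullet> x = (\<Sum>k\<in>UNIV. \<Sum>l\<in>UNIV. B$k$l * y l * y l)"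
    unfolding R1 by (subst sum.swap) (simp add: Bs)
  have "0 \<le> (\<Sum>k\<in>UNIV. \<Sum>l\<in>UNIV. B$k$l * (y k - y l)^2)"
    by (intro sum_nonneg mult_nonneg_nonneg nn) auto
  also have "\<dots> = (\<Sum>k\<in>UNIV. \<Sum>l\<in>UNIV. B$k$l * y k * y k) + (\<Sum>k\<in>UNIV. \<Sum>l\<in>UNIV. B$k$l * y l * y l)
      - 2 * (\<Sum>k\<in>UNIV. \<Sum>l\<in>UNIV. B$k$l * y k * y l)"
    by (simp add: power2_eq_square algebra_simps sum.distrib sum_subtractf sum_distrib_left)
  finally show ?thesis using L R1 R2 by linarith
qed

lemma inv_props:
  fixes M :: "real^'n^'n"
  assumes "invertible M"
  shows "M ** matrix_inv M = mat 1" "matrix_inv M ** M = mat 1"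
  using someI_ex[OF assms[unfolded invertible_def]] unfolding matrix_inv_def by auto

lemma inv_sym:
  fixes M :: "real^'n^'n"
  assumes "invertible M" "transpose M = M"
  shows "transpose (matrix_inv M) = matrix_inv M"
proof -
  let ?P = "matrix_inv M"
  have "transpose ?P ** M = mat 1"
    by (metis assms(2) inv_props(1)[OF assms(1)] matrix_transpose_mul transpose_mat)
  then have "transpose ?P = transpose ?P ** (M ** ?P)" using inv_props(1)[OF assms(1)] by simp
  also have "\<dots> = ?P" by (simp add: matrix_mul_assoc \<open>transpose ?P ** M = mat 1\<close>)
  finally show ?thesis .
qed

lemma trace_outer:
  fixes X :: "real^'n^'n"
  shows "trace (X ** outer w w) = w \<bullet> (X *v w)"
  by (simp add: trace_def matrix_matrix_mult_def outer_def inner_vec_def matrix_vector_mult_def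
       sum_distrib_left mult_ac)

lemma outer_mult:
  fixes w :: "real^'n"
  shows "outer w w *v z = (w \<bullet> z) *\<^sub>R w"
  by (simp add: outer_def vec_eq_iff matrix_vector_mult_def inner_vec_def sum_distrib_left mult_ac)

definition KM :: "real \<Rightarrow> real^'n^'n \<Rightarrow> real^'n^'n" where
  "KM r B = (1 + r) *\<^sub>R mat 1 - diagm (\<lambda>k. 1 / sqrt (deg B $ k)) ** B ** diagm (\<lambda>k. 1 / sqrt (deg B $ k))
     + (1 / (\<Sum>k\<in>UNIV. \<bar>deg B $ k\<bar>)) *\<^sub>R outer (\<chi> k. sqrt (deg B $ k)) (\<chi> k. sqrt (deg B $ k))"

lemma kemeny_KM: "kemeny_reg r B = trace (matrix_inv (KM r B)) - 1 / (1 + r)"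
  by (simp add: kemeny_reg_def KM_def Let_def)

lemma KM_entry: "KM r B $ k $ l = (1 + r) * (if k = l then 1 else 0)
   - (1 / sqrt (deg B $ k)) * B$k$l * (1 / sqrt (deg B $ l))
   + (1 / (\<Sum>k\<in>UNIV. \<bar>deg B $ k\<bar>)) * (sqrt (deg B $ k) * sqrt (deg B $ l))"
  unfolding KM_def by (simp add: diag_sandwich outer_def mat_def del: One_nat_def)

lemma KM_sym:
  assumes "transpose B = B"
  shows "transpose (KM r B) = KM r B"
proof -
  have Bs: "B$l$k = B$k$l" for k l using assms by (metis transpose_def vec_lambda_beta)
  show ?thesis unfolding vec_eq_iff transpose_def by (auto simp: KM_entry Bs mult_ac)
qed

lemma KM_quad:
  fixes B :: "real^'n^'n"
  assumes sym: "transpose B = B" and nn: "\<And>k l. B$k$l \<ge> 0" and dp: "\<And>k. deg B $ k > 0"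
  shows "x \<bullet> (KM r B *v x) \<ge> r * (x \<bullet> x)"
proof -
  let ?Dm = "diagm (\<lambda>k. 1 / sqrt (deg B $ k))"
  let ?sq = "(\<chi> k. sqrt (deg B $ k)) :: real^'n"
  let ?c = "1 / (\<Sum>k\<in>UNIV. \<bar>deg B $ k\<bar>)"
  have c: "?c \<ge> 0" by (simp add: sum_nonneg)
  have e: "x \<bullet> (KM r B *v x) = (1 + r) * (x \<bullet> x) - x \<bullet> ((?Dm ** B ** ?Dm) *v x) + ?c * (?sq \<bullet> x)^2"
    unfolding KM_def
    by (simp add: matrix_vector_mult_add_rdistrib matrix_vector_mult_diff_rdistrib
        scaleR_matrix_vector_assoc[symmetric] outer_mult inner_diff_right inner_add_right power2_eq_square
        inner_commute)
  have n: "x \<bullet> ((?Dm ** B ** ?Dm) *v x) \<le> x \<bullet> x" by (rule norm_quad[OF assms])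
  have p: "?c * (?sq \<bullet> x)^2 \<ge> 0" using c by simp
  show ?thesis using e n p by (simp only: distrib_right)
qed

lemma pd_invertible:
  fixes M :: "real^'n^'n"
  assumes "\<And>x. x \<bullet> (M *v x) \<ge> r * (x \<bullet> x)" "r > 0"
  shows "invertible M"
proof -
  have "inj ((*v) M)"
  proof (rule injI)
    fix x y assume "M *v x = M *v y"
    then have "M *v (x - y) = 0" by (simp add: matrix_vector_mult_diff_distrib)
    then have "r * ((x - y) \<bullet> (x - y)) \<le> 0" using assms(1)[of "x - y"] by simp
    then have "(x - y) \<bullet> (x - y) \<le> 0" using assms(2) by (simp add: mult_le_0_iff)
    then show "x = y" by (metis inner_eq_zero_iff eq_iff_diff_eq_0 inner_ge_zero order_antisym)
  qed
  then show ?thesis using matrix_left_invertible_injective invertible_left_inverse by blast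
qed


lemma mm_diff_l: "(X::real^'n^'n) ** (B - C) = X ** B - X ** C"
  by (simp add: vec_eq_iff matrix_matrix_mult_def sum_subtractf algebra_simps)
lemma mm_diff_r: "((B::real^'n^'n) - C) ** X = B ** X - C ** X"
  by (simp add: vec_eq_iff matrix_matrix_mult_def sum_subtractf algebra_simps)

lemma sm_l: "(X::real^'n^'n) ** (c *\<^sub>R Y) = c *\<^sub>R (X ** Y)"
  by (simp add: vec_eq_iff matrix_matrix_mult_def sum_distrib_left mult_ac)
lemma sm_r: "(c *\<^sub>R Y) ** (X::real^'n^'n) = c *\<^sub>R (Y ** X)"
  by (simp add: vec_eq_iff matrix_matrix_mult_def sum_distrib_left mult_ac)
lemma sm_v: "(c *\<^sub>R (Y::real^'n^'n)) *v x = c *\<^sub>R (Y *v x)"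
  by (simp add: vec_eq_iff matrix_vector_mult_def sum_distrib_left mult_ac)
lemma tr_sm: "trace (c *\<^sub>R (Y::real^'n^'n)) = c * trace Y"
  by (simp add: trace_def sum_distrib_left)

lemma er_entry: "edge_removed A i j $ k $ l = A$k$l + A$i$j * ((axis i 1 - axis j 1) $ k * (axis i 1 - axis j 1) $ l)"
  by (simp add: edge_removed_def outer_def Let_def)

lemma sum_v: "(\<Sum>l\<in>UNIV. (axis i (1::real) - axis j 1) $ l) = 0"
  by (simp add: sum_subtractf axis_def)

lemma deg_er: "deg (edge_removed A i j) = deg A"
  unfolding deg_def vec_eq_iff
  by (simp add: matrix_vector_mult_def er_entry sum.distrib sum_distrib_left[symmetric] sum_v
       mult.assoc[symmetric] del: vector_minus_component)

lemma KM_er: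
  "KM r (edge_removed A i j) = KM r A - (A$i$j) *\<^sub>R outer (diagm (\<lambda>k. 1 / sqrt (deg A $ k)) *v (axis i 1 - axis j 1))
      (diagm (\<lambda>k. 1 / sqrt (deg A $ k)) *v (axis i 1 - axis j 1))"
proof -
  have dv: "(diagm f *v v) $ k = f k * v $ k" for f and v :: "real^'n" and k
    by (simp add: diagm_def matrix_vector_mult_def if_distrib if_distribR cong: if_cong)
  show ?thesis
    apply (simp only: vec_eq_iff vector_minus_component vector_scaleR_component outer_def
        vec_lambda_beta dv KM_entry deg_er er_entry)
    apply (simp add: algebra_simps)
    done
qed

theorem mainTheorem9:
  fixes A :: "real^'n^'n" and i j :: 'n and r :: real
  assumes "transpose A = A"
    and "\<And>k l. A $ k $ l \<ge> 0"
    and "\<And>k. deg A $ k > 0"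
    and "i \<noteq> j"
    and "A $ i $ j > 0"
    and "r > 0"
  shows "centrality_reg r A i j \<ge> 0"
proof -
  define v :: "real^'n" where "v = axis i 1 - axis j 1"
  define w where "w = diagm (\<lambda>k. 1 / sqrt (deg A $ k)) *v v"
  define a where "a = A$i$j"
  define Ah where "Ah = edge_removed A i j"
  define M where "M = KM r A"
  define Mh where "Mh = KM r Ah"
  have Mh: "Mh = M - a *\<^sub>R outer w w" unfolding Mh_def M_def Ah_def w_def v_def a_def by (rule KM_er)
  have As: "A$l$k = A$k$l" for k l using assms(1) by (metis transpose_def vec_lambda_beta)
  have Ahs: "transpose Ah = Ah" unfolding Ah_def vec_eq_iff transpose_def
    by (auto simp: er_entry As mult.commute)
  have Ahn: "Ah$k$l \<ge> 0" for k l
  proof -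
    have "A$k$l + a * (v$k * v$l) \<ge> 0"
    proof (cases "k = l")
      case True then show ?thesis using assms(2)[of k l] assms(5) unfolding a_def by simp
    next
      case False
      have "v$k * v$l \<ge> 0 \<or> ((k = i \<and> l = j) \<or> (k = j \<and> l = i))"
        unfolding v_def using False assms(4) by (auto simp: axis_def)
      then show ?thesis
      proof
        assume "v$k * v$l \<ge> 0" then show ?thesis using assms(2)[of k l] assms(5) unfolding a_def by simp
      next
        assume "(k = i \<and> l = j) \<or> (k = j \<and> l = i)"
        then show ?thesis using assms(4) As[of i j] unfolding a_def v_def by (auto simp: axis_def)
      qed
    qed
    then show ?thesis unfolding Ah_def er_entry v_def a_def .
  qed
  have Ahd: "deg Ah $ k > 0" for k unfolding Ah_def deg_er using assms(3) .
  have qM: "\<And>x. x \<bullet> (M *v x) \<ge> r * (x \<bullet> x)" unfolding M_def by (rule KM_quad[OF assms(1-3)])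
  have qMh: "\<And>x. x \<bullet> (Mh *v x) \<ge> r * (x \<bullet> x)" unfolding Mh_def by (rule KM_quad[OF Ahs Ahn Ahd])
  have iM: "invertible M" by (rule pd_invertible[OF qM assms(6)])
  have iMh: "invertible Mh" by (rule pd_invertible[OF qMh assms(6)])
  define P where "P = matrix_inv M"
  define Q where "Q = matrix_inv Mh"
  note PM = inv_props[OF iM, folded P_def] and QM = inv_props[OF iMh, folded Q_def]
  have Ps: "transpose P = P" unfolding P_def by (rule inv_sym[OF iM]) (simp add: M_def KM_sym assms(1))
  have MMh: "M - Mh = a *\<^sub>R outer w w" using Mh by simp
  have e1: "Q ** M ** P = Q" "Q ** Mh ** P = P" "P ** M ** Q = Q" "P ** Mh ** Q = P"
    by (simp_all only: matrix_mul_assoc[symmetric] PM QM matrix_mul_rid)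
       (simp_all only: matrix_mul_assoc PM QM matrix_mul_lid)
  have d1: "Q - P = Q ** (M - Mh) ** P"
    by (simp add: mm_diff_l mm_diff_r e1)
  have d2: "Q - P = P ** (M - Mh) ** Q"
    by (simp add: mm_diff_l mm_diff_r e1)
  define t where "t = w \<bullet> (Q *v w)"
  have t0: "t \<ge> 0"
  proof -
    have "Mh *v (Q *v w) = w" by (simp add: matrix_vector_mul_assoc QM)
    then have "t = (Q *v w) \<bullet> (Mh *v (Q *v w))" unfolding t_def by (simp add: inner_commute)
    also have "\<dots> \<ge> r * ((Q *v w) \<bullet> (Q *v w))" by (rule qMh)
    moreover have "r * ((Q *v w) \<bullet> (Q *v w)) \<ge> 0" using assms(6) by simp
    ultimately show ?thesis by linarith
  qed
  have Qw: "Q *v w = (1 + a * t) *\<^sub>R (P *v w)"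
  proof -
    have "Q *v w - P *v w = (Q - P) *v w" by (simp add: matrix_vector_mult_diff_rdistrib)
    also have "\<dots> = a *\<^sub>R (P *v (outer w w *v (Q *v w)))" unfolding d2 MMh
      by (simp only: sm_l sm_r sm_v matrix_vector_mul_assoc matrix_mul_assoc)
    also have "\<dots> = (a * t) *\<^sub>R (P *v w)" by (simp add: outer_mult t_def matrix_vector_mult_scaleR)
    finally show ?thesis by (simp add: algebra_simps)
  qed
  have "trace Q - trace P = trace (Q - P)" by (simp add: trace_sub)
  also have "\<dots> = a * trace (P ** Q ** outer w w)" unfolding d1 MMh
    by (simp only: sm_l sm_r tr_sm trace_mul_sym[of "Q ** outer w w" P] matrix_mul_assoc)
  also have "\<dots> = a * (w \<bullet> (P *v (Q *v w)))" by (simp add: trace_outer matrix_vector_mul_assoc)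
  also have "\<dots> = a * ((P *v w) \<bullet> (Q *v w))"
    by (metis Ps dot_lmul_matrix transpose_matrix_vector)
  also have "\<dots> = a * (1 + a * t) * ((P *v w) \<bullet> (P *v w))" by (simp add: Qw)
  finally have "trace Q - trace P \<ge> 0" using t0 assms(5) unfolding a_def by simp
  then show ?thesis
    unfolding centrality_reg_def kemeny_KM Q_def P_def Mh_def M_def Ah_def by simp
qed

end
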